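(* If $V$ is an $\Re$-module containing a vector $v$ with $Bv=\theta_0^*v$, $(B-\theta_1^* )(A-\theta_0)v=\varphi_1v$, $\alpha v=\zeta v$, $\beta v=\zeta^*v$, $\delta v=\eta v$, then there exists a unique $\Re$-module homomorphism $M_\nu(a,b,c)\to V$ sending $m_0$ to $v$.
   Context: $\mathbb F$ is algebraically closed with $\operatorname{char}\mathbb F\ne2$. The Racah algebra $\Re$ is the unital associative $\mathbb F$-algebra with generators $A,B,C,D$ and relations $[A,B]=[B,C]=[C,A]=2D$ together with the requirement that each of $\alpha:=[A,D]+AC-BA$, $\beta:=[B,D]+BA-CB$, $\gamma:=[C,D]+CB-AC$ is central in $\Re$; $\delta:=A+B+C$. For $a,b,c,\nu\in\mathbb F$ and $i\in\mathbb Z$: $\theta_i=(a+\tfrac\nu2-i)(a+\tfrac\nu2-i+1)$, $\theta_i^*=(b+\tfrac\nu2-i)(b+\tfrac\nu2-i+1)$, $\varphi_i=i(i-\nu-1)(a+b+c+\tfrac\nu2-i+2)(a+b-c+\tfrac\nu2-i+1)$, $\zeta=(c-b)(c+b+1)(a-\tfrac\nu2)(a+\tfrac\nu2+1)$, $\zeta^*=(a-c)(a+c+1)(b-\tfrac\nu2)(b+\tfrac\nu2+1)$, $\eta=\tfrac\nu2(\tfrac\nu2+1)+a(a+1)+b(b+1)+c(c+1)$. $M_\nu(a,b,c)$ is the $\Re$-module with $\mathbb F$-basis $\{m_i\}_{i\ge0}$ such that $Am_i=\theta_im_i+m_{i+1}$ ($i\ge0$), $Bm_0=\theta_0^*m_0$,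 $Bm_i=\theta_i^*m_i+\varphi_im_{i-1}$ ($i\ge1$), and $\alpha,\beta,\delta$ act as $\zeta,\zeta^*,\eta$. *)

theory Defs
  imports "HOL-Computational_Algebra.Polynomial"
begin

definition opcomm :: "('v::ab_group_add \<Rightarrow> 'v) \<Rightarrow> ('v \<Rightarrow> 'v) \<Rightarrow> 'v \<Rightarrow> 'v" where
  "opcomm X Y = (\<lambda>x. X (Y x) - Y (X x))"

definition rac_alpha :: "('v::ab_group_add \<Rightarrow> 'v) \<Rightarrow> ('v \<Rightarrow> 'v) \<Rightarrow> ('v \<Rightarrow> 'v) \<Rightarrow> ('v \<Rightarrow> 'v) \<Rightarrow> 'v \<Rightarrow> 'v" where
  "rac_alpha A B C D = (\<lambda>x. opcomm A D x + A (C x) - B (A x))"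
definition rac_beta :: "('v::ab_group_add \<Rightarrow> 'v) \<Rightarrow> ('v \<Rightarrow> 'v) \<Rightarrow> ('v \<Rightarrow> 'v) \<Rightarrow> ('v \<Rightarrow> 'v) \<Rightarrow> 'v \<Rightarrow> 'v" where
  "rac_beta A B C D = (\<lambda>x. opcomm B D x + B (A x) - C (B x))"
definition rac_gamma :: "('v::ab_group_add \<Rightarrow> 'v) \<Rightarrow> ('v \<Rightarrow> 'v) \<Rightarrow> ('v \<Rightarrow> 'v) \<Rightarrow> ('v \<Rightarrow> 'v) \<Rightarrow> 'v \<Rightarrow> 'v" where
  "rac_gamma A B C D = (\<lambda>x. opcomm C D x + C (B x) - A (C x))"
definition rac_delta :: "('v::ab_group_add \<Rightarrow> 'v) \<Rightarrow> ('v \<Rightarrow> 'v) \<Rightarrow> ('v \<Rightarrow> 'v) \<Rightarrow> 'v \<Rightarrow> 'v" where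
  "rac_delta A B C = (\<lambda>x. A x + B x + C x)"

definition commutes_with_gens ::
  "('v \<Rightarrow> 'v) \<Rightarrow> ('v \<Rightarrow> 'v) \<Rightarrow> ('v \<Rightarrow> 'v) \<Rightarrow> ('v \<Rightarrow> 'v) \<Rightarrow> ('v \<Rightarrow> 'v) \<Rightarrow> bool" where
  "commutes_with_gens Z A B C D \<longleftrightarrow>
     (\<forall>x. Z (A x) = A (Z x)) \<and> (\<forall>x. Z (B x) = B (Z x)) \<and>
     (\<forall>x. Z (C x) = C (Z x)) \<and> (\<forall>x. Z (D x) = D (Z x))"

(* Central in the algebra = commutes with all generators. *)
definition racah_module ::
  "('f::field \<Rightarrow> 'v::ab_group_add \<Rightarrow> 'v) \<Rightarrow> ('v \<Rightarrow> 'v) \<Rightarrow> ('v \<Rightarrow> 'v) \<Rightarrow> ('v \<Rightarrow> 'v) \<Rightarrow> ('v \<Rightarrow> 'v) \<Rightarrow> bool" where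
  "racah_module scale A B C D \<longleftrightarrow>
     vector_space scale \<and>
     module_hom scale scale A \<and> module_hom scale scale B \<and>
     module_hom scale scale C \<and> module_hom scale scale D \<and>
     (\<forall>x. opcomm A B x = scale 2 (D x)) \<and>
     (\<forall>x. opcomm B C x = scale 2 (D x)) \<and>
     (\<forall>x. opcomm C A x = scale 2 (D x)) \<and>
     commutes_with_gens (rac_alpha A B C D) A B C D \<and>
     commutes_with_gens (rac_beta A B C D) A B C D \<and>
     commutes_with_gens (rac_gamma A B C D) A B C D"

definition racah_hom ::
  "('f::field \<Rightarrow> 'u::ab_group_add \<Rightarrow> 'u) \<Rightarrow> ('u \<Rightarrow> 'u) \<Rightarrow> ('u \<Rightarrow> 'u) \<Rightarrow> ('u \<Rightarrow> 'u) \<Rightarrow> ('u \<Rightarrow> 'u) \<Rightarrow>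
   ('f \<Rightarrow> 'v::ab_group_add \<Rightarrow> 'v) \<Rightarrow> ('v \<Rightarrow> 'v) \<Rightarrow> ('v \<Rightarrow> 'v) \<Rightarrow> ('v \<Rightarrow> 'v) \<Rightarrow> ('v \<Rightarrow> 'v) \<Rightarrow>
   ('u \<Rightarrow> 'v) \<Rightarrow> bool" where
  "racah_hom s1 A1 B1 C1 D1 s2 A2 B2 C2 D2 f \<longleftrightarrow>
     module_hom s1 s2 f \<and>
     (\<forall>x. f (A1 x) = A2 (f x)) \<and> (\<forall>x. f (B1 x) = B2 (f x)) \<and>
     (\<forall>x. f (C1 x) = C2 (f x)) \<and> (\<forall>x. f (D1 x) = D2 (f x))"

definition th :: "'f::field \<Rightarrow> 'f \<Rightarrow> int \<Rightarrow> 'f" where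
  "th a \<nu> i = (a + \<nu>/2 - of_int i) * (a + \<nu>/2 - of_int i + 1)"
definition ths :: "'f::field \<Rightarrow> 'f \<Rightarrow> int \<Rightarrow> 'f" where
  "ths b \<nu> i = (b + \<nu>/2 - of_int i) * (b + \<nu>/2 - of_int i + 1)"
definition phi :: "'f::field \<Rightarrow> 'f \<Rightarrow> 'f \<Rightarrow> 'f \<Rightarrow> int \<Rightarrow> 'f" where
  "phi a b c \<nu> i = of_int i * (of_int i - \<nu> - 1) * (a + b + c + \<nu>/2 - of_int i + 2)
                     * (a + b - c + \<nu>/2 - of_int i + 1)"
definition zeta :: "'f::field \<Rightarrow> 'f \<Rightarrow> 'f \<Rightarrow> 'f \<Rightarrow> 'f" where
  "zeta a b c \<nu> = (c - b) * (c + b + 1) * (a - \<nu>/2) * (a + \<nu>/2 + 1)"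
definition zetas :: "'f::field \<Rightarrow> 'f \<Rightarrow> 'f \<Rightarrow> 'f \<Rightarrow> 'f" where
  "zetas a b c \<nu> = (a - c) * (a + c + 1) * (b - \<nu>/2) * (b + \<nu>/2 + 1)"
definition eta :: "'f::field \<Rightarrow> 'f \<Rightarrow> 'f \<Rightarrow> 'f \<Rightarrow> 'f" where
  "eta a b c \<nu> = \<nu>/2 * (\<nu>/2 + 1) + a * (a + 1) + b * (b + 1) + c * (c + 1)"

(* The module M_nu(a,b,c): underlying space = finitely supported sequences,
   represented as 'f poly, with basis m_i = monom 1 i; scalar multiplication smult. *)
definition mvec :: "nat \<Rightarrow> 'f::field poly" where
  "mvec i = monom 1 i"

definition MA_basis :: "'f::field \<Rightarrow> 'f \<Rightarrow> 'f \<Rightarrow> 'f \<Rightarrow> nat \<Rightarrow> 'f poly" where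
  "MA_basis a b c \<nu> i = smult (th a \<nu> (int i)) (mvec i) + mvec (Suc i)"
definition MB_basis :: "'f::field \<Rightarrow> 'f \<Rightarrow> 'f \<Rightarrow> 'f \<Rightarrow> nat \<Rightarrow> 'f poly" where
  "MB_basis a b c \<nu> i = (if i = 0 then smult (ths b \<nu> 0) (mvec 0)
     else smult (ths b \<nu> (int i)) (mvec i) + smult (phi a b c \<nu> (int i)) (mvec (i - 1)))"

definition MA :: "'f::field \<Rightarrow> 'f \<Rightarrow> 'f \<Rightarrow> 'f \<Rightarrow> 'f poly \<Rightarrow> 'f poly" where
  "MA a b c \<nu> p = (\<Sum>i\<le>degree p. smult (coeff p i) (MA_basis a b c \<nu> i))"
definition MB :: "'f::field \<Rightarrow> 'f \<Rightarrow> 'f \<Rightarrow> 'f \<Rightarrow> 'f poly \<Rightarrow> 'f poly" where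
  "MB a b c \<nu> p = (\<Sum>i\<le>degree p. smult (coeff p i) (MB_basis a b c \<nu> i))"
(* C is forced by delta = A + B + C acting as eta *)
definition MC :: "'f::field \<Rightarrow> 'f \<Rightarrow> 'f \<Rightarrow> 'f \<Rightarrow> 'f poly \<Rightarrow> 'f poly" where
  "MC a b c \<nu> p = smult (eta a b c \<nu>) p - MA a b c \<nu> p - MB a b c \<nu> p"
(* D is forced by [A,B] = 2D *)
definition MD :: "'f::field \<Rightarrow> 'f \<Rightarrow> 'f \<Rightarrow> 'f \<Rightarrow> 'f poly \<Rightarrow> 'f poly" where
  "MD a b c \<nu> p = smult (1/2) (MA a b c \<nu> (MB a b c \<nu> p) - MB a b c \<nu> (MA a b c \<nu> p))"

end

theory Submission imports Defs begin


lemma step_core: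
  fixes scale :: "'f::field \<Rightarrow> 'v::ab_group_add \<Rightarrow> 'v"
  assumes two: "(2::'f) \<noteq> 0"
  and vs: "vector_space scale" and lA: "module_hom scale scale A" and lB: "module_hom scale scale B"
  and Au: "A u = scale p1 e1 + scale t0 u" and Ae1: "A e1 = e2 + scale t1 e1" and Ae2: "A e2 = e3 + scale t2 e2"
  and Be1: "B e1 = scale s1 e1 + u" and Be2: "B e2 = scale s2 e2 + scale p2 e1"
  and rel: "scale (1/2) (A (A (B e1)) - A (B (A e1))) - scale (1/2) (A (B (A e1)) - B (A (A e1)))
            + A (scale h e1 - A e1 - B e1) - B (A e1) = scale z e1"
  and h0: "1 / (2::'f) * (t0 * t0 - t0 * t1) - 1 / (2::'f) * (t0 * t1 - t1 * t1) + t0 * - 1 - t1 = 0"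
  and h1: "1 / (2::'f) * (p1 * t0 + t1 * (p1 + t1 * s1) - (p1 * t1 + t1 * (s1 * t1 + p2))) -
  1 / (2::'f) * (p1 * t1 + t1 * (s1 * t1 + p2) - (s1 * (t1 * t1) + p2 * (t1 + t2))) +
  (p1 * - 1 + t1 * (h - t1 - s1)) - (s1 * t1 + p2) = z"
  and h2: "1 / (2::'f) * (p1 + t1 * s1 + t2 * s1 - (s1 * t1 + p2 + t2 * s2)) -
  1 / (2::'f) * (s1 * t1 + p2 + t2 * s2 - s2 * (t1 + t2)) + (h - t1 - s1 + t2 * - 1) - s2 = - p3 / 2"
  and h3: "1 / (2::'f) * (s1 - s2) - 1 / (2::'f) * s2 + - 1 = - s3 / 2"
  shows "B e3 = scale s3 e3 + scale p3 e2"
proof -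
  interpret vector_space scale by (rule vs)
  interpret A: module_hom scale scale A by (rule lA)
  interpret B: module_hom scale scale B by (rule lB)
  define L where "L = (\<lambda>x0 x1 x2 x3 x4. scale x0 u + scale x1 e1 + scale x2 e2 + scale x3 e3 + scale x4 (B e3))"
  have AL: "A (L x0 x1 x2 0 0) = L (t0*x0) (p1*x0+t1*x1) (x1+t2*x2) x2 0" for x0 x1 x2
    unfolding L_def by (simp add: A.add A.scale Au Ae1 Ae2 algebra_simps)
  have BL: "B (L 0 x1 x2 x3 0) = L x1 (s1*x1+p2*x2) (s2*x2) 0 x3" for x1 x2 x3
    unfolding L_def by (simp add: B.add B.scale Be1 Be2 algebra_simps)
  have Ladd: "L x0 x1 x2 x3 x4 + L y0 y1 y2 y3 y4 = L (x0+y0) (x1+y1) (x2+y2) (x3+y3) (x4+y4)" for x0 x1 x2 x3 x4 y0 y1 y2 y3 y4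
    unfolding L_def by (simp add: algebra_simps)
  have Ldiff: "L x0 x1 x2 x3 x4 - L y0 y1 y2 y3 y4 = L (x0-y0) (x1-y1) (x2-y2) (x3-y3) (x4-y4)" for x0 x1 x2 x3 x4 y0 y1 y2 y3 y4
    unfolding L_def by (simp add: algebra_simps)
  have Lscale: "scale k (L x0 x1 x2 x3 x4) = L (k*x0) (k*x1) (k*x2) (k*x3) (k*x4)" for k x0 x1 x2 x3 x4
    unfolding L_def by (simp add: algebra_simps)
  have e1L: "e1 = L 0 1 0 0 0" unfolding L_def by simp
  from rel have "scale (1/2) (A (A (B (L 0 1 0 0 0))) - A (B (A (L 0 1 0 0 0)))) - scale (1/2) (A (B (A (L 0 1 0 0 0))) - B (A (A (L 0 1 0 0 0))))
            + A (scale h (L 0 1 0 0 0) - A (L 0 1 0 0 0) - B (L 0 1 0 0 0)) - B (A (L 0 1 0 0 0)) = scale z (L 0 1 0 0 0)"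
    by (simp only: e1L)
  note r = this[simplified AL BL Ladd Ldiff Lscale mult_zero_right mult_zero_left mult_1_right mult_1_left add_0_left add_0_right diff_zero diff_0 diff_0_right]
  note r2 = r[unfolded h0 h1 h2 h3]
  have "scale 2 (L 0 z (- p3 / 2) (- s3 / 2) (- (1 / 2 * - 1))) = scale 2 (L 0 z 0 0 0)"
    using r2 by simp
  then have "scale (- p3) e2 + scale (- s3) e3 + B e3 = 0"
    unfolding Lscale unfolding L_def using two by (simp add: algebra_simps)
  then show ?thesis by (simp add: algebra_simps eq_neg_iff_add_eq_0 add_eq_0_iff2) 
qed

lemma id0: fixes a \<nu> :: "'f::field" assumes two: "(2::'f) \<noteq> 0"
  shows "let t0 = th a \<nu> (i - 1); t1 = th a \<nu> i in
   1 / (2::'f) * (t0 * t0 - t0 * t1) - 1 / (2::'f) * (t0 * t1 - t1 * t1) + t0 * - 1 - t1 = 0"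
proof -
  define n where "n = \<nu>/2"
  define h where "h = (1::'f)/2"
  have h2: "2*h = 1" using two unfolding h_def by simp
  show ?thesis unfolding th_def Let_def n_def[symmetric] h_def[symmetric] of_int_diff of_int_add of_int_1 of_int_numeral
    using h2 by algebra
qed
lemma id1: fixes a b c \<nu> :: "'f::field" assumes two: "(2::'f) \<noteq> 0"
  shows "let t0 = th a \<nu> (i - 1); t1 = th a \<nu> i; t2 = th a \<nu> (i+1); s1 = ths b \<nu> i; s2 = ths b \<nu> (i+1);
   p1 = phi a b c \<nu> i; p2 = phi a b c \<nu> (i+1); h = eta a b c \<nu>; z = zeta a b c \<nu> in
  1 / (2::'f) * (p1 * t0 + t1 * (p1 + t1 * s1) - (p1 * t1 + t1 * (s1 * t1 + p2))) -
  1 / (2::'f) * (p1 * t1 + t1 * (s1 * t1 + p2) - (s1 * (t1 * t1) + p2 * (t1 + t2))) +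
  (p1 * - 1 + t1 * (h - t1 - s1)) - (s1 * t1 + p2) = z"
proof -
  define n where "n = \<nu>/2"
  define h where "h = (1::'f)/2"
  have h2: "2*h = 1" using two unfolding h_def by simp
  have nu: "\<nu> = 2*n" using two unfolding n_def by simp
  show ?thesis unfolding th_def ths_def phi_def eta_def zeta_def Let_def n_def[symmetric] h_def[symmetric] of_int_diff of_int_add of_int_1 of_int_numeral
    unfolding nu using h2 by algebra
qed
lemma id2: fixes a b c \<nu> :: "'f::field" assumes two: "(2::'f) \<noteq> 0"
  shows "let t0 = th a \<nu> (i - 1); t1 = th a \<nu> i; t2 = th a \<nu> (i+1); s1 = ths b \<nu> i; s2 = ths b \<nu> (i+1);
   p1 = phi a b c \<nu> i; p2 = phi a b c \<nu> (i+1); h = eta a b c \<nu>; p3 = phi a b c \<nu> (i+2) in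
  1 / (2::'f) * (p1 + t1 * s1 + t2 * s1 - (s1 * t1 + p2 + t2 * s2)) -
  1 / (2::'f) * (s1 * t1 + p2 + t2 * s2 - s2 * (t1 + t2)) + (h - t1 - s1 + t2 * - 1) - s2 = - p3 / 2"
proof -
  define n where "n = \<nu>/2"
  define h where "h = (1::'f)/2"
  have h2: "2*h = 1" using two unfolding h_def by simp
  have nu: "\<nu> = 2*n" using two unfolding n_def by simp
  have p: "- x / 2 = - h * x" for x :: 'f unfolding h_def by simp
  show ?thesis unfolding p th_def ths_def phi_def eta_def zeta_def Let_def n_def[symmetric] h_def[symmetric] of_int_diff of_int_add of_int_1 of_int_numeral
    unfolding nu using h2 by algebra
qed
lemma id3: fixes b \<nu> :: "'f::field" assumes two: "(2::'f) \<noteq> 0"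
  shows "let s1 = ths b \<nu> i; s2 = ths b \<nu> (i+1); s3 = ths b \<nu> (i+2) in
   1 / (2::'f) * (s1 - s2) - 1 / (2::'f) * s2 + - 1 = - s3 / 2"
proof -
  define n where "n = \<nu>/2"
  define h where "h = (1::'f)/2"
  have h2: "2*h = 1" using two unfolding h_def by simp
  have p: "- x / 2 = - h * x" for x :: 'f unfolding h_def by simp
  show ?thesis unfolding p ths_def Let_def n_def[symmetric] h_def[symmetric] of_int_diff of_int_add of_int_1 of_int_numeral
    using h2 by algebra
qed

primrec vsq :: "('v::ab_group_add \<Rightarrow> 'v) \<Rightarrow> ('f \<Rightarrow> 'v \<Rightarrow> 'v) \<Rightarrow> (nat \<Rightarrow> 'f) \<Rightarrow> 'v \<Rightarrow> nat \<Rightarrow> 'v" where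
  "vsq A s t v 0 = v"
| "vsq A s t v (Suc i) = A (vsq A s t v i) - s (t i) (vsq A s t v i)"

lemma poly_module: "module (smult :: 'f::field \<Rightarrow> 'f poly \<Rightarrow> 'f poly)"
  by unfold_locales (simp_all add: smult_add_right smult_add_left)

lemma eigen_prop:
  fixes scale :: "'f::field \<Rightarrow> 'v::ab_group_add \<Rightarrow> 'v"
  assumes vs: "vector_space scale" and lA: "module_hom scale scale A"
    and Llin: "\<And>x y t. L (x - scale t y) = L x - scale t (L y)"
    and LA: "\<And>x. L (A x) = A (L x)" and Lv: "L v = scale k v"
  shows "L (vsq A scale t v i) = scale k (vsq A scale t v i)"
proof (induction i)
  case 0 then show ?case using Lv by simp
next
  case (Suc i)
  interpret vector_space scale by (rule vs)
  interpret A: module_hom scale scale A by (rule lA)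
  show ?case using Suc by (simp add: Llin LA A.scale algebra_simps scale_left_commute)
qed


theorem proposition3p7:
  fixes a b c \<nu> :: "'f::alg_closed_field"
    and scale :: "'f \<Rightarrow> 'v::ab_group_add \<Rightarrow> 'v"
    and A B C D :: "'v \<Rightarrow> 'v"
    and v :: 'v
  assumes char: "(2::'f) \<noteq> 0"
    and V: "racah_module scale A B C D"
    and hB: "B v = scale (ths b \<nu> 0) v"
    and hBA: "(let w = A v - scale (th a \<nu> 0) v in B w - scale (ths b \<nu> 1) w)
                = scale (phi a b c \<nu> 1) v"
    and halpha: "rac_alpha A B C D v = scale (zeta a b c \<nu>) v"
    and hbeta: "rac_beta A B C D v = scale (zetas a b c \<nu>) v"
    and hdelta: "rac_delta A B C v = scale (eta a b c \<nu>) v"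
  shows "\<exists>!f. racah_hom smult (MA a b c \<nu>) (MB a b c \<nu>) (MC a b c \<nu>) (MD a b c \<nu>)
                        scale A B C D f
             \<and> f (mvec 0) = v"
proof -
  from V have vs: "vector_space scale" and lA: "module_hom scale scale A" and lB: "module_hom scale scale B"
    and lC: "module_hom scale scale C" and lD: "module_hom scale scale D"
    and cAB: "\<And>x. opcomm A B x = scale 2 (D x)" and cCA: "\<And>x. opcomm C A x = scale 2 (D x)"
    and alA: "\<And>x. rac_alpha A B C D (A x) = A (rac_alpha A B C D x)"
    unfolding racah_module_def commutes_with_gens_def by auto
  interpret vector_space scale by (rule vs)
  interpret A: module_hom scale scale A by (rule lA)
  interpret B: module_hom scale scale B by (rule lB)
  interpret C: module_hom scale scale C by (rule lC)
  interpret D: module_hom scale scale D by (rule lD)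
  have half: "scale (1/2) (scale 2 x) = x" for x using char by simp
  have Dform: "D y = scale (1/2) (A (B y) - B (A y))" for y
    using cAB[of y] half[of "D y"] unfolding opcomm_def by simp
  have dA: "rac_delta A B C (A x) = A (rac_delta A B C x)" for x
  proof -
    have "C (A x) - A (C x) = A (B x) - B (A x)" using cAB[of x] cCA[of x] by (simp add: opcomm_def)
    then have e: "C (A x) = A (B x) - B (A x) + A (C x)" by (simp add: diff_eq_eq)
    show ?thesis unfolding rac_delta_def by (simp add: A.add e algebra_simps)
  qed
  have dlin: "rac_delta A B C (x - scale t y) = rac_delta A B C x - scale t (rac_delta A B C y)" for x y t
    unfolding rac_delta_def by (simp add: A.diff A.scale B.diff B.scale C.diff C.scale algebra_simps)
  have alin: "rac_alpha A B C D (x - scale t y) = rac_alpha A B C D x - scale t (rac_alpha A B C D y)" for x y t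
    unfolding rac_alpha_def opcomm_def
    by (simp add: A.diff A.scale B.diff B.scale C.diff C.scale D.diff D.scale algebra_simps)
  define t where "t = (\<lambda>i::nat. th a \<nu> (int i))"
  define vv where "vv = vsq A scale t v"
  have vv0: "vv 0 = v" by (simp add: vv_def)
  have vvS: "vv (Suc i) = A (vv i) - scale (th a \<nu> (int i)) (vv i)" for i by (simp add: vv_def t_def)
  have Avv: "A (vv i) = vv (Suc i) + scale (th a \<nu> (int i)) (vv i)" for i by (simp add: vvS)
  have dvv: "rac_delta A B C (vv i) = scale (eta a b c \<nu>) (vv i)" for i
    unfolding vv_def by (rule eigen_prop[OF vs lA]) (auto simp: dlin dA hdelta)
  have avv: "rac_alpha A B C D (vv i) = scale (zeta a b c \<nu>) (vv i)" for i
    unfolding vv_def by (rule eigen_prop[OF vs lA]) (auto simp: alin alA halpha)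
  have phi0: "phi a b c \<nu> 0 = 0" by (simp add: phi_def)
  have Bind: "B (vv i) = scale (ths b \<nu> (int i)) (vv i) + scale (phi a b c \<nu> (int i)) (vv (i - 1))
     \<and> B (vv (Suc i)) = scale (ths b \<nu> (int i + 1)) (vv (Suc i)) + scale (phi a b c \<nu> (int i + 1)) (vv i)" for i
  proof (induction i)
    case 0
    have "B (vv 1) - scale (ths b \<nu> 1) (vv 1) = scale (phi a b c \<nu> 1) (vv 0)"
      using hBA by (simp add: vv0 vvS Let_def)
    then show ?case by (simp add: vv0 hB phi0 diff_eq_eq add.commute)
  next
    case (Suc i)
    have IH1: "B (vv i) = scale (ths b \<nu> (int i)) (vv i) + scale (phi a b c \<nu> (int i)) (vv (i - 1))"
      and IH2: "B (vv (Suc i)) = scale (ths b \<nu> (int i + 1)) (vv (Suc i)) + scale (phi a b c \<nu> (int i + 1)) (vv i)"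
      using Suc by auto
    define u where "u = scale (phi a b c \<nu> (int i)) (vv (i - 1))"
    have Au: "A u = scale (phi a b c \<nu> (int i)) (vv i) + scale (th a \<nu> (int i - 1)) u"
    proof (cases i)
      case 0 then show ?thesis by (simp add: u_def phi0)
    next
      case (Suc j)
      have "int i - 1 = int j" using Suc by simp
      then show ?thesis unfolding u_def using Suc
        by (simp add: A.scale Avv scale_right_distrib scale_left_commute)
    qed
    have Ae2: "A (vv (Suc i)) = vv (Suc (Suc i)) + scale (th a \<nu> (int i + 1)) (vv (Suc i))"
      using Avv[of "Suc i"] by (simp add: add.commute)
    have Be1: "B (vv i) = scale (ths b \<nu> (int i)) (vv i) + u" using IH1 by (simp add: u_def)
    have Ce: "C (vv i) = scale (eta a b c \<nu>) (vv i) - A (vv i) - B (vv i)"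
      using dvv[of i] unfolding rac_delta_def by (simp add: algebra_simps)
    have rel: "scale (1/2) (A (A (B (vv i))) - A (B (A (vv i)))) - scale (1/2) (A (B (A (vv i))) - B (A (A (vv i))))
            + A (scale (eta a b c \<nu>) (vv i) - A (vv i) - B (vv i)) - B (A (vv i)) = scale (zeta a b c \<nu>) (vv i)"
    proof -
      have "rac_alpha A B C D (vv i) = scale (1/2) (A (A (B (vv i))) - A (B (A (vv i)))) - scale (1/2) (A (B (A (vv i))) - B (A (A (vv i))))
            + A (scale (eta a b c \<nu>) (vv i) - A (vv i) - B (vv i)) - B (A (vv i))"
        unfolding rac_alpha_def opcomm_def Dform[of "vv i"] Dform[of "A (vv i)"] Ce
        by (simp add: A.scale A.diff)
      then show ?thesis using avv[of i] by simp
    qed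
    have step: "B (vv (Suc (Suc i))) = scale (ths b \<nu> (int i + 2)) (vv (Suc (Suc i))) + scale (phi a b c \<nu> (int i + 2)) (vv (Suc i))"
      by (rule step_core[OF char vs lA lB Au Avv Ae2 Be1 IH2 rel
            id0[OF char, of a \<nu> "int i", unfolded Let_def]
            id1[OF char, of a \<nu> "int i" b c, unfolded Let_def]
            id2[OF char, of a \<nu> "int i" b c, unfolded Let_def]
            id3[OF char, of b \<nu> "int i", unfolded Let_def]])
    have "int (Suc i) = int i + 1" by simp
    moreover have "int i + 1 + 1 = int i + 2" by simp
    ultimately show ?case using step IH2 by (simp add: add.commute)
  qed
  have Bvv: "B (vv i) = scale (ths b \<nu> (int i)) (vv i) + scale (phi a b c \<nu> (int i)) (vv (i - 1))" for i
    using Bind by blast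
  define f where "f = (\<lambda>p. \<Sum>j\<le>degree p. scale (coeff p j) (vv j))"
  have fsum: "f p = (\<Sum>j<n. scale (coeff p j) (vv j))" if "degree p < n" for p n
    unfolding f_def using that
    by (intro sum.mono_neutral_right[symmetric]) (auto simp: coeff_eq_0)
  have fadd: "f (p + q) = f p + f q" for p q
  proof -
    let ?n = "Suc (max (degree p) (degree q))"
    have "degree (p + q) < ?n" using degree_add_le_max[of p q] by simp
    then have "f (p + q) = (\<Sum>j<?n. scale (coeff (p + q) j) (vv j))" by (rule fsum)
    also have "\<dots> = (\<Sum>j<?n. scale (coeff p j) (vv j)) + (\<Sum>j<?n. scale (coeff q j) (vv j))"
      by (simp add: scale_left_distrib sum.distrib)
    also have "\<dots> = f p + f q"
    proof -
      have hp: "f p = (\<Sum>j<?n. scale (coeff p j) (vv j))" by (rule fsum) simp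
      have hq: "f q = (\<Sum>j<?n. scale (coeff q j) (vv j))" by (rule fsum) simp
      show ?thesis by (simp only: hp hq)
    qed
    finally show ?thesis .
  qed
  have fscale: "f (smult r p) = scale r (f p)" for r p
  proof -
    have "degree (smult r p) < Suc (degree p)" using degree_smult_le[of r p] by simp
    then have "f (smult r p) = (\<Sum>j<Suc (degree p). scale (coeff (smult r p) j) (vv j))" by (rule fsum)
    also have "\<dots> = scale r (\<Sum>j<Suc (degree p). scale (coeff p j) (vv j))"
      by (simp add: scale_sum_right del: sum.lessThan_Suc)
    also have "\<dots> = scale r (f p)"
    proof -
      have hp: "f p = (\<Sum>j<Suc (degree p). scale (coeff p j) (vv j))" by (rule fsum) simp
      show ?thesis by (simp only: hp)
    qed
    finally show ?thesis .
  qed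
  have flin: "module_hom smult scale f"
    using poly_module vs fadd fscale
    by (simp add: module_hom_def module_hom_axioms_def module_iff_vector_space)
  interpret F: module_hom smult scale f by (rule flin)
  have fmon: "f (monom r k) = scale r (vv k)" for r k
  proof -
    have "degree (monom r k) < Suc k" using degree_monom_le[of r k] by simp
    then have "f (monom r k) = (\<Sum>j<Suc k. scale (coeff (monom r k) j) (vv j))" by (rule fsum)
    also have "\<dots> = (\<Sum>j<Suc k. if k = j then scale r (vv j) else 0)"
      by (rule sum.cong) auto
    also have "\<dots> = scale r (vv k)" by simp
    finally show ?thesis .
  qed
  have fm: "f (mvec k) = vv k" for k using fmon[of 1 k] by (simp add: mvec_def)
  have fA: "f (MA a b c \<nu> p) = A (f p)" for p
  proof -
    have "f (MA a b c \<nu> p) = (\<Sum>j\<le>degree p. scale (coeff p j) (f (MA_basis a b c \<nu> j)))"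
      unfolding MA_def by (simp add: F.sum fscale)
    also have "\<dots> = (\<Sum>j\<le>degree p. scale (coeff p j) (A (vv j)))"
      by (simp add: MA_basis_def fadd fscale fm Avv add.commute)
    also have "\<dots> = A (f p)" unfolding f_def by (simp add: A.sum A.scale)
    finally show ?thesis .
  qed
  have fMB: "f (MB_basis a b c \<nu> j) = B (vv j)" for j
    by (cases j) (simp_all add: MB_basis_def fadd fscale fm Bvv phi0)
  have fB: "f (MB a b c \<nu> p) = B (f p)" for p
  proof -
    have "f (MB a b c \<nu> p) = (\<Sum>j\<le>degree p. scale (coeff p j) (f (MB_basis a b c \<nu> j)))"
      unfolding MB_def by (simp add: F.sum fscale)
    also have "\<dots> = (\<Sum>j\<le>degree p. scale (coeff p j) (B (vv j)))"
      by (simp add: fMB)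
    also have "\<dots> = B (f p)" unfolding f_def by (simp add: B.sum B.scale)
    finally show ?thesis .
  qed
  have fdelta: "rac_delta A B C (f p) = scale (eta a b c \<nu>) (f p)" for p
  proof -
    have "rac_delta A B C (f p) = (\<Sum>j\<le>degree p. scale (coeff p j) (rac_delta A B C (vv j)))"
      unfolding f_def rac_delta_def
      by (simp add: A.sum B.sum C.sum A.scale B.scale C.scale sum.distrib scale_right_distrib)
    also have "\<dots> = (\<Sum>j\<le>degree p. scale (coeff p j) (scale (eta a b c \<nu>) (vv j)))"
      by (simp add: dvv)
    also have "\<dots> = scale (eta a b c \<nu>) (f p)"
      unfolding f_def by (simp add: scale_sum_right mult.commute)
    finally show ?thesis .
  qed
  have fC: "f (MC a b c \<nu> p) = C (f p)" for p
  proof -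
    have "f (MC a b c \<nu> p) = scale (eta a b c \<nu>) (f p) - A (f p) - B (f p)"
      unfolding MC_def by (simp add: F.diff fscale fA fB)
    moreover have "C (f p) = scale (eta a b c \<nu>) (f p) - A (f p) - B (f p)"
      using fdelta[of p] unfolding rac_delta_def by (simp add: algebra_simps)
    ultimately show ?thesis by simp
  qed
  have fD: "f (MD a b c \<nu> p) = D (f p)" for p
    unfolding MD_def Dform by (simp add: F.diff fscale fA fB)
  have fhom: "racah_hom smult (MA a b c \<nu>) (MB a b c \<nu>) (MC a b c \<nu>) (MD a b c \<nu>) scale A B C D f"
    unfolding racah_hom_def using flin fA fB fC fD by blast
  have MAm: "MA a b c \<nu> (mvec k) = MA_basis a b c \<nu> k" for k
  proof -
    have "MA a b c \<nu> (mvec k) = (\<Sum>j\<le>k. if k = j then MA_basis a b c \<nu> j else 0)"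
      unfolding MA_def mvec_def degree_monom_eq[OF one_neq_zero]
      by (rule sum.cong) auto
    then show ?thesis by simp
  qed
  show ?thesis
  proof (rule ex1I[of _ f])
    show "racah_hom smult (MA a b c \<nu>) (MB a b c \<nu>) (MC a b c \<nu>) (MD a b c \<nu>) scale A B C D f \<and> f (mvec 0) = v"
      using fhom fm[of 0] vv0 by simp
  next
    fix g assume hg: "racah_hom smult (MA a b c \<nu>) (MB a b c \<nu>) (MC a b c \<nu>) (MD a b c \<nu>) scale A B C D g \<and> g (mvec 0) = v"
    then have glin: "module_hom smult scale g" and gA: "\<And>x. g (MA a b c \<nu> x) = A (g x)" and g0: "g (mvec 0) = v"
      unfolding racah_hom_def by auto
    interpret G: module_hom smult scale g by (rule glin)
    have gm: "g (mvec k) = vv k" for k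
    proof (induction k)
      case 0 then show ?case using g0 vv0 by simp
    next
      case (Suc k)
      have "mvec (Suc k) = MA a b c \<nu> (mvec k) - smult (th a \<nu> (int k)) (mvec k)"
        by (simp add: MAm MA_basis_def)
      then have "g (mvec (Suc k)) = A (g (mvec k)) - scale (th a \<nu> (int k)) (g (mvec k))"
        by (simp add: G.diff G.scale gA)
      then show ?case using Suc vvS by simp
    qed
    show "g = f"
    proof
      fix p
      have "g p = g (\<Sum>j\<le>degree p. smult (coeff p j) (mvec j))"
        by (simp add: mvec_def smult_monom poly_as_sum_of_monoms)
      also have "\<dots> = f p" unfolding f_def by (simp add: G.sum G.scale gm)
      finally show "g p = f p" .
    qed
  qed
qed

end
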